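(* Let $A$ be a $C^*$-algebra, and let $0<r<\frac{1}{2}$, $\theta\in[0,\infty)$ be real numbers. Suppose $f:A\to A$ satisfies $$\Big\|\mu f\Big(\frac{x+y}{2}\Big)+\mu f\Big(\frac{x-y}{2}\Big)-f(\mu x)+f(a^2)-f(a)a-af(a)+f(w^* )-(f(w))^*\Big\|\le \theta(\|x\|^r\|y\|^r+\|a\|^{2r}+\|w\|^r)$$ for all $\mu\in\mathbb{T}$ and all $x,y,a,w\in A$. Then there exists a unique $*$-Jordan derivation $D:A\to A$ such that $$\|f(x)-D(x)\|\le \frac{3^r\theta}{2-2^r}\|x\|^{2r}$$ for all $x\in A$.
   Context: $\mathbb{T}=\{\mu\in\mathbb{C}:|\mu|=1\}$. A Jordan derivation on an algebra $A$ is a linear map $D:A\to A$ with $D(a^2)=D(a)a+aD(a)$ for all $a\in A$. On a $C^*$-algebra, a $*$-Jordan derivation is a Jordan derivation $D$ with $D(a^* )=(D(a))^*$ for all $a\in A$. *)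

theory Defs
  imports "HOL-Analysis.Analysis"
begin

text \<open>The underlying real Banach algebra
structure is the type class; the complex scalar multiplication cscale extends the
real one, and star is the involution.\<close>

locale cstar_algebra =
  fixes cscale :: "complex \<Rightarrow> 'a::{real_normed_algebra, banach} \<Rightarrow> 'a"
    and star :: "'a \<Rightarrow> 'a"
  assumes cscale_of_real: "\<And>r x. cscale (complex_of_real r) x = r *\<^sub>R x"
    and cscale_add_left: "\<And>a b x. cscale (a + b) x = cscale a x + cscale b x"
    and cscale_add_right: "\<And>a x y. cscale a (x + y) = cscale a x + cscale a y"
    and cscale_assoc: "\<And>a b x. cscale a (cscale b x) = cscale (a * b) x"
    and cscale_mult_left: "\<And>a x y. cscale a (x * y) = cscale a x * y"
    and cscale_mult_right: "\<And>a x y. cscale a (x * y) = x * cscale a y"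
    and norm_cscale: "\<And>a x. norm (cscale a x) = cmod a * norm x"
    and star_star: "\<And>x. star (star x) = x"
    and star_add: "\<And>x y. star (x + y) = star x + star y"
    and star_cscale: "\<And>a x. star (cscale a x) = cscale (cnj a) (star x)"
    and star_mult: "\<And>x y. star (x * y) = star y * star x"
    and cstar_identity: "\<And>x. norm (star x * x) = (norm x)\<^sup>2"

definition complex_linear_map :: "(complex \<Rightarrow> 'a \<Rightarrow> 'a) \<Rightarrow> ('a::real_normed_algebra \<Rightarrow> 'a) \<Rightarrow> bool" where
  "complex_linear_map cscale D \<longleftrightarrow>
     (\<forall>x y. D (x + y) = D x + D y) \<and> (\<forall>c x. D (cscale c x) = cscale c (D x))"

definition jordan_derivation :: "(complex \<Rightarrow> 'a \<Rightarrow> 'a) \<Rightarrow> ('a::real_normed_algebra \<Rightarrow> 'a) \<Rightarrow> bool" where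
  "jordan_derivation cscale D \<longleftrightarrow>
     complex_linear_map cscale D \<and> (\<forall>a. D (a * a) = D a * a + a * D a)"

definition star_jordan_derivation ::
  "(complex \<Rightarrow> 'a \<Rightarrow> 'a) \<Rightarrow> ('a \<Rightarrow> 'a) \<Rightarrow> ('a::real_normed_algebra \<Rightarrow> 'a) \<Rightarrow> bool" where
  "star_jordan_derivation cscale star D \<longleftrightarrow>
     jordan_derivation cscale D \<and> (\<forall>a. D (star a) = star (D a))"

end

theory Submission
  imports Defs
begin

lemma vanish:
  fixes v :: "'b::real_normed_vector"
  assumes A: "\<And>n::nat. 2^n * norm v \<le> C * q^n" and q0: "0 \<le> q" and q2: "q < 2"
  shows "v = 0"
proof (rule ccontr)
  assume "v \<noteq> 0" hence nv: "norm v > 0" by simp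
  from A[of 0] have "norm v \<le> C" by simp
  hence C: "C > 0" using nv by linarith
  have "q/2 < 1" using q2 by simp
  then obtain n where n: "(q/2)^n < norm v / C"
    using real_arch_pow_inv[of "norm v / C" "q/2"] nv C by auto
  hence "C * (q/2)^n < norm v" using C by (simp add: field_simps)
  hence "2^n * (C * (q/2)^n) < 2^n * norm v" by simp
  moreover have "C*q^n = 2^n * (C*(q/2)^n)" by (simp add: power_divide)
  ultimately show False using A[of n] by linarith
qed

lemma pow2_powr: "((2::real)^n) powr p = (2 powr p)^n"
proof (induction n)
  case 0 then show ?case by simp
next
  case (Suc n)
  have "((2::real)^Suc n) powr p = (2 * 2^n) powr p" by simp
  also have "\<dots> = 2 powr p * (2^n) powr p" by (simp add: powr_mult)
  finally show ?case using Suc by simp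
qed

lemma powr_scale: "0 \<le> t \<Longrightarrow> ((2::real)^n * t) powr p = (2 powr p)^n * t powr p"
  by (simp add: powr_mult pow2_powr)

lemma two_powr_lt: "(s::real) < 1 \<Longrightarrow> 2 powr s < 2"
  using powr_less_mono[of s 1 2] by simp

context cstar_algebra
begin

lemma cscale_one: "cscale 1 x = x" using cscale_of_real[of 1 x] by simp
lemma star_zero: "star 0 = 0" using star_add[of 0 0] by simp
lemma star_scaleR: "star (t *\<^sub>R x) = t *\<^sub>R star x"
  using star_cscale[of "of_real t" x] cscale_of_real by simp

lemma main:
  fixes f :: "'a \<Rightarrow> 'a" and r \<theta> :: real
  assumes r0: "0 < r" and r1: "r < 1/2" and th: "0 \<le> \<theta>"
    and H: "\<And>\<mu> x y a w. cmod \<mu> = 1 \<Longrightarrow>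
      norm (cscale \<mu> (f ((1/2) *\<^sub>R (x + y))) + cscale \<mu> (f ((1/2) *\<^sub>R (x - y)))
            - f (cscale \<mu> x) + f (a * a) - f a * a - a * f a + f (star w) - star (f w))
      \<le> \<theta> * (norm x powr r * norm y powr r + norm a powr (2 * r) + norm w powr r)"
  shows "star_jordan_derivation cscale star f"
proof -
  have "norm (f 0 + f 0 - f 0 + f 0 + f 0 - star (f 0)) \<le> 0"
    using H[of 1 0 0 0 0] by (simp add: cscale_one star_zero)
  hence "star (f 0) = (1+1+1::real) *\<^sub>R f 0" by (simp only: scaleR_left_distrib scaleR_one) simp
  hence s3: "star (f 0) = 3 *\<^sub>R f 0" by simp
  have "f 0 = star (star (f 0))" by (simp add: star_star)
  also have "\<dots> = 9 *\<^sub>R f 0" using s3 by (simp add: star_scaleR)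
  finally have f0: "f 0 = 0"
  proof -
    assume "f 0 = 9 *\<^sub>R f 0"
    hence e: "9 *\<^sub>R f 0 - 1 *\<^sub>R f 0 = 0" by simp
    have "(9 - 1::real) *\<^sub>R f 0 = 9 *\<^sub>R f 0 - 1 *\<^sub>R f 0" by (rule scaleR_left_diff_distrib)
    with e have "(8::real) *\<^sub>R f 0 = 0" by simp
    thus "f 0 = 0" by simp
  qed
  have E1: "norm (cscale \<mu> (f ((1/2) *\<^sub>R (x + y))) + cscale \<mu> (f ((1/2) *\<^sub>R (x - y)))
            - f (cscale \<mu> x)) \<le> \<theta> * (norm x powr r * norm y powr r)" if "cmod \<mu> = 1" for \<mu> x y
    using H[of \<mu> x y 0 0] that f0 star_zero by simp
  have dbl: "f (2 *\<^sub>R z) = 2 *\<^sub>R f z" for z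
  proof -
    have "norm (f z + f z - f (2 *\<^sub>R z)) \<le> 0"
      using E1[of 1 "2 *\<^sub>R z" 0] by (simp add: cscale_one)
    thus ?thesis by (simp add: scaleR_2)
  qed
  have dbln: "f ((2^n) *\<^sub>R z) = 2^n *\<^sub>R f z" for n z
  proof (induction n)
    case 0 then show ?case by simp
  next
    case (Suc n)
    have "f ((2^Suc n) *\<^sub>R z) = f (2 *\<^sub>R ((2^n) *\<^sub>R z))" by simp
    also have "\<dots> = 2 *\<^sub>R (2^n *\<^sub>R f z)" by (simp only: dbl Suc)
    finally show ?case by simp
  qed
  have hom1: "f (cscale \<mu> x) = cscale \<mu> (f x)" if "cmod \<mu> = 1" for \<mu> x
  proof -
    let ?h = "(1/2) *\<^sub>R x"
    have "norm (cscale \<mu> (f ?h) + cscale \<mu> (f ?h) - f (cscale \<mu> x)) \<le> 0"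
      using E1[of \<mu> x 0] that by simp
    hence "f (cscale \<mu> x) = cscale \<mu> (f ?h) + cscale \<mu> (f ?h)" by simp
    also have "\<dots> = cscale \<mu> (f ?h + f ?h)" by (simp add: cscale_add_right)
    also have "f ?h + f ?h = f x" using dbl[of ?h] by (simp add: scaleR_2)
    finally show ?thesis .
  qed
  have q2: "2 powr (2*r) < 2" using r1 by (intro two_powr_lt) simp
  have q1: "2 powr r < 2" using r1 by (intro two_powr_lt) simp
  have pq: "(2 powr (2*r))^n = (2 powr r)^n * (2 powr r)^n" for n :: nat
  proof -
    have "(2::real) powr (2*r) = 2 powr (r + r)" by simp
    also have "\<dots> = 2 powr r * 2 powr r" by (rule powr_add)
    finally show ?thesis by (simp add: power_mult_distrib)
  qed
  have add: "f (s + t) = f s + f t" for s t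
  proof -
    let ?v = "f s + f t - f (s + t)"
    have "?v = 0"
    proof (rule vanish[where C = "\<theta> * (norm (s+t) powr r * norm (s-t) powr r)" and q = "2 powr (2*r)"])
      fix n :: nat
      have e1: "(1/2) *\<^sub>R (2^n *\<^sub>R (s+t) + 2^n *\<^sub>R (s-t)) = 2^n *\<^sub>R s"
        by (simp add: algebra_simps scaleR_2[symmetric])
      have e2: "(1/2) *\<^sub>R (2^n *\<^sub>R (s+t) - 2^n *\<^sub>R (s-t)) = 2^n *\<^sub>R t"
        by (simp add: algebra_simps scaleR_2[symmetric])
      have "norm (f (2^n *\<^sub>R s) + f (2^n *\<^sub>R t) - f (2^n *\<^sub>R (s+t)))
          \<le> \<theta> * (norm (2^n *\<^sub>R (s+t)) powr r * norm (2^n *\<^sub>R (s-t)) powr r)"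
        using E1[of 1 "2^n *\<^sub>R (s+t)" "2^n *\<^sub>R (s-t)"] by (simp add: cscale_one e1 e2)
      also have "\<dots> = \<theta> * (norm (s+t) powr r * norm (s-t) powr r) * (2 powr (2*r))^n"
        by (simp add: powr_scale pq)
      also have "norm (f (2^n *\<^sub>R s) + f (2^n *\<^sub>R t) - f (2^n *\<^sub>R (s+t))) = 2^n * norm ?v"
        by (simp add: dbln scaleR_right_diff_distrib[symmetric] scaleR_right_distrib[symmetric])
      finally show "2^n * norm ?v \<le> \<theta> * (norm (s+t) powr r * norm (s-t) powr r) * (2 powr (2*r))^n" .
    qed (use q2 in auto)
    thus ?thesis by simp
  qed
  have JW: "norm (f (a * a) - f a * a - a * f a + f (star w) - star (f w))
      \<le> \<theta> * (norm a powr (2 * r) + norm w powr r)" for a w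
    using H[of 1 0 0 a w] f0 by (simp add: cscale_one)
  have jor: "f (a * a) = f a * a + a * f a" for a
  proof -
    let ?v = "f (a * a) - f a * a - a * f a"
    have "?v = 0"
    proof (rule vanish[where C = "\<theta> * norm a powr (2*r)" and q = "2 powr (2*r)"])
      fix n :: nat
      have m: "(2^n *\<^sub>R a) * (2^n *\<^sub>R a) = 2^n *\<^sub>R (2^n *\<^sub>R (a * a))" by simp
      have "norm (f ((2^n *\<^sub>R a) * (2^n *\<^sub>R a)) - f (2^n *\<^sub>R a) * (2^n *\<^sub>R a) - (2^n *\<^sub>R a) * f (2^n *\<^sub>R a))
          \<le> \<theta> * norm (2^n *\<^sub>R a) powr (2 * r)"
        using JW[of "2^n *\<^sub>R a" 0] f0 star_zero by simp
      also have "\<dots> = \<theta> * norm a powr (2*r) * (2 powr (2*r))^n"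
        by (simp add: powr_scale)
      also have "f ((2^n *\<^sub>R a) * (2^n *\<^sub>R a)) - f (2^n *\<^sub>R a) * (2^n *\<^sub>R a) - (2^n *\<^sub>R a) * f (2^n *\<^sub>R a)
           = 2^n *\<^sub>R (2^n *\<^sub>R ?v)"
        unfolding m dbln by (simp add: scaleR_right_diff_distrib)
      finally have "2^n * (2^n * norm ?v) \<le> \<theta> * norm a powr (2*r) * (2 powr (2*r))^n" by simp
      moreover have "2^n * norm ?v \<le> 2^n * (2^n * norm ?v)"
      proof -
        have "1 * norm ?v \<le> 2^n * norm ?v" by (rule mult_right_mono) auto
        thus ?thesis by (intro mult_left_mono) auto
      qed
      ultimately show "2^n * norm ?v \<le> \<theta> * norm a powr (2*r) * (2 powr (2*r))^n" by linarith
    qed (use q2 in auto)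
    thus ?thesis by (simp add: algebra_simps)
  qed
  have stf: "f (star w) = star (f w)" for w
  proof -
    let ?v = "f (star w) - star (f w)"
    have "?v = 0"
    proof (rule vanish[where C = "\<theta> * norm w powr r" and q = "2 powr r"])
      fix n :: nat
      have "norm (f (star (2^n *\<^sub>R w)) - star (f (2^n *\<^sub>R w))) \<le> \<theta> * norm (2^n *\<^sub>R w) powr r"
        using JW[of 0 "2^n *\<^sub>R w"] f0 r0 by simp
      also have "\<dots> = \<theta> * norm w powr r * (2 powr r)^n"
        by (simp add: powr_scale)
      also have "f (star (2^n *\<^sub>R w)) - star (f (2^n *\<^sub>R w)) = 2^n *\<^sub>R ?v"
        by (simp add: star_scaleR dbln scaleR_right_diff_distrib)
      finally show "2^n * norm ?v \<le> \<theta> * norm w powr r * (2 powr r)^n" by simp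
    qed (use q1 in auto)
    thus ?thesis by simp
  qed
  have homR2: "f (t *\<^sub>R x) = t *\<^sub>R f x" if "\<bar>t\<bar> \<le> 2" for t x
  proof -
    define \<mu> where "\<mu> = Complex (t/2) (sqrt (1 - (t/2)^2))"
    have "t^2 \<le> 2^2" using abs_le_square_iff[of t 2] that by simp
    hence le: "(t/2)^2 \<le> 1" by (simp add: power_divide)
    have m1: "cmod \<mu> = 1" unfolding \<mu>_def cmod_def using le by simp
    have m2: "cmod (cnj \<mu>) = 1" using m1 by simp
    have sum: "\<mu> + cnj \<mu> = complex_of_real t" unfolding \<mu>_def by (simp add: complex_eq_iff)
    have "t *\<^sub>R x = cscale \<mu> x + cscale (cnj \<mu>) x"
      using cscale_of_real[of t x] cscale_add_left[of \<mu> "cnj \<mu>" x] sum by simp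
    hence "f (t *\<^sub>R x) = cscale \<mu> (f x) + cscale (cnj \<mu>) (f x)" using add hom1 m1 m2 by simp
    also have "\<dots> = t *\<^sub>R f x"
      using cscale_of_real[of t "f x"] cscale_add_left[of \<mu> "cnj \<mu>" "f x"] sum by simp
    finally show ?thesis .
  qed
  have homR: "f (t *\<^sub>R x) = t *\<^sub>R f x" for t x
  proof -
    obtain n where n: "\<bar>t\<bar> < 2^n" using real_arch_pow[of 2 "\<bar>t\<bar>"] by auto
    have "\<bar>t / 2^n\<bar> \<le> 2" using n by (simp add: divide_le_eq)
    have "t *\<^sub>R x = 2^n *\<^sub>R ((t / 2^n) *\<^sub>R x)" by simp
    hence "f (t *\<^sub>R x) = 2^n *\<^sub>R ((t / 2^n) *\<^sub>R f x)"
      using dbln homR2[OF \<open>\<bar>t / 2^n\<bar> \<le> 2\<close>] by metis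
    thus ?thesis by simp
  qed
  have homC: "f (cscale c x) = cscale c (f x)" for c x
  proof (cases "c = 0")
    case True
    then show ?thesis using cscale_of_real[of 0] f0 by simp
  next
    case False
    define u where "u = c / complex_of_real (cmod c)"
    have u1: "cmod u = 1" using False unfolding u_def by (simp add: norm_divide)
    have c: "c = complex_of_real (cmod c) * u" using False unfolding u_def by simp
    have "cscale c x = cmod c *\<^sub>R cscale u x"
      by (subst c, simp only: cscale_assoc[symmetric] cscale_of_real)
    moreover have "cscale c (f x) = cmod c *\<^sub>R cscale u (f x)"
      by (subst c, simp only: cscale_assoc[symmetric] cscale_of_real)
    ultimately show ?thesis using homR hom1[OF u1] by simp
  qed
  show ?thesis unfolding star_jordan_derivation_def jordan_derivation_def complex_linear_map_def
    using add homC jor stf by blast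
qed
end
theorem corollary2p10:
  fixes cscale :: "complex \<Rightarrow> 'a::{real_normed_algebra, banach} \<Rightarrow> 'a"
    and star :: "'a \<Rightarrow> 'a"
    and f :: "'a \<Rightarrow> 'a"
    and r \<theta> :: real
  assumes "cstar_algebra cscale star"
    and "0 < r" and "r < 1/2" and "0 \<le> \<theta>"
    and "\<And>\<mu> x y a w. cmod \<mu> = 1 \<Longrightarrow>
      norm (cscale \<mu> (f ((1/2) *\<^sub>R (x + y))) + cscale \<mu> (f ((1/2) *\<^sub>R (x - y)))
            - f (cscale \<mu> x) + f (a * a) - f a * a - a * f a + f (star w) - star (f w))
      \<le> \<theta> * (norm x powr r * norm y powr r + norm a powr (2 * r) + norm w powr r)"
  shows "\<exists>!D. star_jordan_derivation cscale star D \<and>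
           (\<forall>x. norm (f x - D x) \<le> 3 powr r * \<theta> / (2 - 2 powr r) * norm x powr (2 * r))"
proof -
  interpret C: cstar_algebra cscale star by fact
  have F: "star_jordan_derivation cscale star f"
    using C.main[OF assms(2,3,4,5)] by blast
  hence Fl: "complex_linear_map cscale f"
    unfolding star_jordan_derivation_def jordan_derivation_def by blast
  define K where "K = 3 powr r * \<theta> / (2 - 2 powr r)"
  have "2 powr r < 2" using assms(3) by (intro two_powr_lt) simp
  hence K0: "K \<ge> 0" unfolding K_def using assms(4) by simp
  have q2: "2 powr (2*r) < 2" using assms(3) by (intro two_powr_lt) simp
  show ?thesis unfolding K_def[symmetric]
  proof (rule ex1I[where a = f])
    show "star_jordan_derivation cscale star f \<and> (\<forall>x. norm (f x - f x) \<le> K * norm x powr (2 * r))"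
      using F K0 by simp
  next
    fix D assume D: "star_jordan_derivation cscale star D \<and> (\<forall>x. norm (f x - D x) \<le> K * norm x powr (2 * r))"
    hence Dl: "complex_linear_map cscale D"
      unfolding star_jordan_derivation_def jordan_derivation_def by blast
    have sc: "g (t *\<^sub>R x) = t *\<^sub>R g x" if "complex_linear_map cscale g" for g t x
    proof -
      have "g (t *\<^sub>R x) = g (cscale (complex_of_real t) x)" by (simp add: C.cscale_of_real)
      also have "\<dots> = cscale (complex_of_real t) (g x)" using that unfolding complex_linear_map_def by blast
      finally show ?thesis by (simp add: C.cscale_of_real)
    qed
    show "D = f"
    proof
      fix x
      let ?v = "f x - D x"
      have "?v = 0"
      proof (rule vanish[where C = "K * norm x powr (2*r)" and q = "2 powr (2*r)"])
        fix n :: nat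
        have "norm (f (2^n *\<^sub>R x) - D (2^n *\<^sub>R x)) \<le> K * norm (2^n *\<^sub>R x) powr (2*r)"
          using D by blast
        also have "\<dots> = K * norm x powr (2*r) * (2 powr (2*r))^n" by (simp add: powr_scale)
        also have "f (2^n *\<^sub>R x) - D (2^n *\<^sub>R x) = 2^n *\<^sub>R ?v"
          using sc[OF Fl] sc[OF Dl] by (simp add: scaleR_right_diff_distrib)
        finally show "2^n * norm ?v \<le> K * norm x powr (2*r) * (2 powr (2*r))^n" by simp
      qed (use q2 in auto)
      thus "D x = f x" by simp
    qed
  qed
qed

end
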